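(* Let $N$, $\epsilon$ and $r_0$ be as described in the context, and let $\psi$ be a solution of $\Box_g\psi=0$ with compactly supported data. Let $\tau_0<\tau_1$ and $\tilde r_0<\tilde r_1<r_0$. Set \[ g(\bar r)=\int_{\tau_0}^{\tau_1}J^N_\mu(\psi)n^\mu_{\mathcal S_{\bar r}}\,e^{a\bar r}\,d\tau, \] and let $r_\star\in(\tilde r_0,\tilde r_1)$ satisfy $g(r_\star)=\frac1{\tilde r_1-\tilde r_0}\int_{\tilde r_0}^{\tilde r_1}g(\bar r)\,d\bar r$. Define \[ \mathcal R_{III}=D^+(\Sigma^{r_\star}_{\tau_0})\cap D^-(\Sigma^{r_\star}_{\tau_1}),\qquad \mathcal R_{III_A}=\mathcal R_{III}\cap\{r\le r_\star\}. \] Then there is a constant $C$ such that \[ \int_{\mathcal R_{III_A}}J^N_\mu(\psi)n^\mu_{\mathcal C_v}\,\mathrm{dVol}\le C\int_{\Sigma_{\tau_0}}J^N_\mu(\psi)n^\mu_{\Sigma_{\tau_0}}\,\mathrm{dVol}_{\Sigma_{\tau_0}}. \]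
   Context: Fix $a>0$. The Rindler spacetime is $\mathcal M=\mathbb R^2_{(\tau,r)}$ with metric $g=e^{2ar}(-d\tau^2+dr^2)$. Null coordinates are $u=\tau-r$, $v=\tau+r$, so $g=-e^{a(v-u)}du\,dv$. Regular coordinates $U=-a^{-1}e^{-au}$, $V=a^{-1}e^{av}$ give $g=-dU\,dV$; compact support of data is meant with respect to $(U,V)$. The spacetime volume form is $\mathrm{dVol}=e^{2ar}d\tau\,dr$. $D^\pm$ denote the future and past domains of dependence. Stress-energy tensor: $T_{\mu\nu}(\psi)=\partial_\mu\psi\partial_\nu\psi-\tfrac12g_{\mu\nu}g^{\alpha\beta}\partial_\alpha\psi\partial_\beta\psi$. For a vector field $V$: $J^V_\mu=T_{\mu\nu}V^\nu$ and $K^V=\tfrac12(\mathcal L_Vg)^{\mu\nu}T_{\mu\nu}$. Normals: - on $\Sigma_\tau=\{\tau=\text{const}\}$: $n=e^{-ar}\partial_\tau$, with $\mathrm{dVol}=e^{ar}dr$; - on $\mathcal S_{\bar r}=\{r=\bar r\}$: $n=e^{-ar}\partial_r$; - on $\mathcal C_u=\{u=\text{const}\}$: $n=2e^{-a(v-u)}\partial_v$; - on $\mathcal C_v=\{v=\text{const}\}$: $n=2e^{-a(v-u)}\partial_u$. Foliation: $\Sigma^{r_1}_{\tau_0}=\{\tau=\tau_0,\ r\ge r_1\}\cup\{v=\tau_0+r_1,\ u\ge\tau_0-r_1\}$. The vector field $N$: fix $\epsilon>0$. $N$ is a future-directed timelike vector field with $[\partial_\tau,N]=0$, for which there exist $r_0<R$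 and constants $c,C,\tilde C>0$ such that: - $(a-\epsilon)J^N_\mu n^\mu_{\mathcal C_v}\le K^N$ for $r\le r_0$; - $cJ^{\partial_\tau}_\mu n^\mu_{\Sigma_\tau}\le J^N_\mu n^\mu_{\Sigma_\tau}\le CJ^{\partial_\tau}_\mu n^\mu_{\Sigma_\tau}$ for $r_0\le r\le R$; - $J^N_\mu n^\mu_{\mathcal C_u}=J^{\partial_\tau}_\mu n^\mu_{\mathcal C_u}$ for $r\ge R$; - $|K^N|\le\tilde CJ^{\partial_\tau}_\mu n^\mu_{\Sigma_\tau}$ for $r_0\le r\le R$. *)

theory Defs
  imports "HOL-Analysis.Analysis"
begin

text \<open>Rindler spacetime M = R^2 with coordinates (tau, r); index 0 = tau, index 1 = r.
  Scalar functions on M are curried functions f tau r; vector fields are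
  functions X tau r mu giving the coordinate components X^mu (mu < 2).\<close>

definition eta :: "nat \<Rightarrow> nat \<Rightarrow> real" where
  "eta \<mu> \<nu> = (if \<mu> = \<nu> then (if \<mu> = 0 then -1 else 1) else 0)"

definition gmet :: "real \<Rightarrow> real \<Rightarrow> nat \<Rightarrow> nat \<Rightarrow> real" where
  "gmet a r \<mu> \<nu> = exp (2*a*r) * eta \<mu> \<nu>"

definition ginv :: "real \<Rightarrow> real \<Rightarrow> nat \<Rightarrow> nat \<Rightarrow> real" where
  "ginv a r \<mu> \<nu> = exp (-2*a*r) * eta \<mu> \<nu>"

definition gdet :: "real \<Rightarrow> real \<Rightarrow> real" where
  "gdet a r = gmet a r 0 0 * gmet a r 1 1 - gmet a r 0 1 * gmet a r 1 0"

definition pd :: "(real \<Rightarrow> real \<Rightarrow> real) \<Rightarrow> nat \<Rightarrow> real \<Rightarrow> real \<Rightarrow> real" where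
  "pd f \<mu> t s = (if \<mu> = 0 then deriv (\<lambda>x. f x s) t else deriv (\<lambda>y. f t y) s)"

definition has_pd :: "(real \<Rightarrow> real \<Rightarrow> real) \<Rightarrow> nat \<Rightarrow> real \<Rightarrow> real \<Rightarrow> bool" where
  "has_pd f \<mu> t s = (if \<mu> = 0 then (\<lambda>x. f x s) differentiable (at t)
                                  else (\<lambda>y. f t y) differentiable (at s))"

definition cont2 :: "(real \<Rightarrow> real \<Rightarrow> real) \<Rightarrow> bool" where
  "cont2 f = continuous_on UNIV (\<lambda>p::real \<times> real. f (fst p) (snd p))"

definition C1_fun :: "(real \<Rightarrow> real \<Rightarrow> real) \<Rightarrow> bool" where
  "C1_fun f = (cont2 f \<and> (\<forall>\<mu><2. (\<forall>t s. has_pd f \<mu> t s) \<and> cont2 (pd f \<mu>)))"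

definition C2_fun :: "(real \<Rightarrow> real \<Rightarrow> real) \<Rightarrow> bool" where
  "C2_fun f = (C1_fun f \<and> (\<forall>\<mu><2. C1_fun (pd f \<mu>)))"

definition C1_field :: "(real \<Rightarrow> real \<Rightarrow> nat \<Rightarrow> real) \<Rightarrow> bool" where
  "C1_field X = (\<forall>\<mu><2. C1_fun (\<lambda>t s. X t s \<mu>))"

definition box_g :: "real \<Rightarrow> (real \<Rightarrow> real \<Rightarrow> real) \<Rightarrow> real \<Rightarrow> real \<Rightarrow> real" where
  "box_g a \<psi> t s = (1 / sqrt \<bar>gdet a s\<bar>) *
     (\<Sum>\<mu><2. pd (\<lambda>t' s'. sqrt \<bar>gdet a s'\<bar> * (\<Sum>\<nu><2. ginv a s' \<mu> \<nu> * pd \<psi> \<nu> t' s')) \<mu> t s)"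

definition gprod :: "real \<Rightarrow> real \<Rightarrow> (nat \<Rightarrow> real) \<Rightarrow> (nat \<Rightarrow> real) \<Rightarrow> real" where
  "gprod a r X Y = (\<Sum>\<mu><2. \<Sum>\<nu><2. gmet a r \<mu> \<nu> * X \<mu> * Y \<nu>)"

definition Tse :: "real \<Rightarrow> (real \<Rightarrow> real \<Rightarrow> real) \<Rightarrow> real \<Rightarrow> real \<Rightarrow> nat \<Rightarrow> nat \<Rightarrow> real" where
  "Tse a \<psi> t s \<mu> \<nu> = pd \<psi> \<mu> t s * pd \<psi> \<nu> t s
     - 1/2 * gmet a s \<mu> \<nu> * (\<Sum>\<alpha><2. \<Sum>\<beta><2. ginv a s \<alpha> \<beta> * pd \<psi> \<alpha> t s * pd \<psi> \<beta> t s)"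

definition Jcur :: "real \<Rightarrow> (real \<Rightarrow> real \<Rightarrow> real) \<Rightarrow> (real \<Rightarrow> real \<Rightarrow> nat \<Rightarrow> real)
     \<Rightarrow> real \<Rightarrow> real \<Rightarrow> nat \<Rightarrow> real" where
  "Jcur a \<psi> V t s \<mu> = (\<Sum>\<nu><2. Tse a \<psi> t s \<mu> \<nu> * V t s \<nu>)"

definition Jn :: "real \<Rightarrow> (real \<Rightarrow> real \<Rightarrow> real) \<Rightarrow> (real \<Rightarrow> real \<Rightarrow> nat \<Rightarrow> real)
     \<Rightarrow> (real \<Rightarrow> real \<Rightarrow> nat \<Rightarrow> real) \<Rightarrow> real \<Rightarrow> real \<Rightarrow> real" where
  "Jn a \<psi> V n t s = (\<Sum>\<mu><2. Jcur a \<psi> V t s \<mu> * n t s \<mu>)"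

definition deform :: "real \<Rightarrow> (real \<Rightarrow> real \<Rightarrow> nat \<Rightarrow> real) \<Rightarrow> real \<Rightarrow> real \<Rightarrow> nat \<Rightarrow> nat \<Rightarrow> real" where
  "deform a V t s \<mu> \<nu> =
     (\<Sum>\<alpha><2. V t s \<alpha> * pd (\<lambda>t' s'. gmet a s' \<mu> \<nu>) \<alpha> t s)
   + (\<Sum>\<alpha><2. gmet a s \<alpha> \<nu> * pd (\<lambda>t' s'. V t' s' \<alpha>) \<mu> t s)
   + (\<Sum>\<alpha><2. gmet a s \<mu> \<alpha> * pd (\<lambda>t' s'. V t' s' \<alpha>) \<nu> t s)"

definition Kcur :: "real \<Rightarrow> (real \<Rightarrow> real \<Rightarrow> real) \<Rightarrow> (real \<Rightarrow> real \<Rightarrow> nat \<Rightarrow> real)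
     \<Rightarrow> real \<Rightarrow> real \<Rightarrow> real" where
  "Kcur a \<psi> V t s = 1/2 * (\<Sum>\<mu><2. \<Sum>\<nu><2.
      (\<Sum>\<alpha><2. \<Sum>\<beta><2. ginv a s \<mu> \<alpha> * ginv a s \<nu> \<beta> * deform a V t s \<alpha> \<beta>)
      * Tse a \<psi> t s \<mu> \<nu>)"

definition lie_bracket :: "(real \<Rightarrow> real \<Rightarrow> nat \<Rightarrow> real) \<Rightarrow> (real \<Rightarrow> real \<Rightarrow> nat \<Rightarrow> real)
     \<Rightarrow> real \<Rightarrow> real \<Rightarrow> nat \<Rightarrow> real" where
  "lie_bracket X Y t s \<mu> =
     (\<Sum>\<nu><2. X t s \<nu> * pd (\<lambda>t' s'. Y t' s' \<mu>) \<nu> t s - Y t s \<nu> * pd (\<lambda>t' s'. X t' s' \<mu>) \<nu> t s)"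

definition d_tau :: "real \<Rightarrow> real \<Rightarrow> nat \<Rightarrow> real" where
  "d_tau t s \<mu> = (if \<mu> = 0 then 1 else 0)"

definition d_r :: "real \<Rightarrow> real \<Rightarrow> nat \<Rightarrow> real" where
  "d_r t s \<mu> = (if \<mu> = 1 then 1 else 0)"

definition ucoord :: "real \<Rightarrow> real \<Rightarrow> real" where "ucoord t s = t - s"
definition vcoord :: "real \<Rightarrow> real \<Rightarrow> real" where "vcoord t s = t + s"
definition Ucoord :: "real \<Rightarrow> real \<Rightarrow> real \<Rightarrow> real" where
  "Ucoord a t s = - (1/a) * exp (- a * ucoord t s)"
definition Vcoord :: "real \<Rightarrow> real \<Rightarrow> real \<Rightarrow> real" where
  "Vcoord a t s = (1/a) * exp (a * vcoord t s)"

definition d_u :: "real \<Rightarrow> real \<Rightarrow> nat \<Rightarrow> real" where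
  "d_u t s \<mu> = (if \<mu> = 0 then 1/2 else if \<mu> = 1 then -1/2 else 0)"
definition d_v :: "real \<Rightarrow> real \<Rightarrow> nat \<Rightarrow> real" where
  "d_v t s \<mu> = (if \<mu> = 0 then 1/2 else if \<mu> = 1 then 1/2 else 0)"

definition n_Sigma :: "real \<Rightarrow> real \<Rightarrow> real \<Rightarrow> nat \<Rightarrow> real" where
  "n_Sigma a t s \<mu> = exp (- a * s) * d_tau t s \<mu>"
definition n_S :: "real \<Rightarrow> real \<Rightarrow> real \<Rightarrow> nat \<Rightarrow> real" where
  "n_S a t s \<mu> = exp (- a * s) * d_r t s \<mu>"
definition n_Cu :: "real \<Rightarrow> real \<Rightarrow> real \<Rightarrow> nat \<Rightarrow> real" where
  "n_Cu a t s \<mu> = 2 * exp (- a * (vcoord t s - ucoord t s)) * d_v t s \<mu>"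
definition n_Cv :: "real \<Rightarrow> real \<Rightarrow> real \<Rightarrow> nat \<Rightarrow> real" where
  "n_Cv a t s \<mu> = 2 * exp (- a * (vcoord t s - ucoord t s)) * d_u t s \<mu>"

definition future_timelike :: "real \<Rightarrow> (real \<Rightarrow> real \<Rightarrow> nat \<Rightarrow> real) \<Rightarrow> bool" where
  "future_timelike a X = (\<forall>t s. gprod a s (X t s) (X t s) < 0 \<and> gprod a s (X t s) (d_tau t s) < 0)"

text \<open>Points of M are pairs (tau, r).\<close>
definition causal_curve_from :: "real \<Rightarrow> bool \<Rightarrow> (real \<Rightarrow> real \<times> real) \<Rightarrow> (real \<times> real) \<Rightarrow> bool" where
  "causal_curve_from a fut \<gamma> p =
    (\<gamma> 0 = p \<and>
     (\<exists>\<gamma>'. continuous_on {0..} \<gamma>' \<and>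
       (\<forall>t\<ge>0. (\<gamma> has_vector_derivative \<gamma>' t) (at t within {0..}) \<and>
          \<gamma>' t \<noteq> 0 \<and>
          gprod a (snd (\<gamma> t)) (\<lambda>\<mu>. if \<mu> = 0 then fst (\<gamma>' t) else snd (\<gamma>' t))
                              (\<lambda>\<mu>. if \<mu> = 0 then fst (\<gamma>' t) else snd (\<gamma>' t)) \<le> 0 \<and>
          (if fut then fst (\<gamma>' t) > 0 else fst (\<gamma>' t) < 0))))"

definition inextendible :: "(real \<Rightarrow> real \<times> real) \<Rightarrow> bool" where
  "inextendible \<gamma> = (\<not> (\<exists>q. (\<gamma> \<longlongrightarrow> q) at_top))"

definition Dplus :: "real \<Rightarrow> (real \<times> real) set \<Rightarrow> (real \<times> real) set" where
  "Dplus a S = {p. \<forall>\<gamma>. causal_curve_from a False \<gamma> p \<and> inextendible \<gamma> \<longrightarrow> (\<exists>t\<ge>0. \<gamma> t \<in> S)}"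

definition Dminus :: "real \<Rightarrow> (real \<times> real) set \<Rightarrow> (real \<times> real) set" where
  "Dminus a S = {p. \<forall>\<gamma>. causal_curve_from a True \<gamma> p \<and> inextendible \<gamma> \<longrightarrow> (\<exists>t\<ge>0. \<gamma> t \<in> S)}"

definition Sigma_hyp :: "real \<Rightarrow> real \<Rightarrow> (real \<times> real) set" where
  "Sigma_hyp \<tau>0 r1 = {(t, s). t = \<tau>0 \<and> s \<ge> r1}
      \<union> {(t, s). vcoord t s = \<tau>0 + r1 \<and> ucoord t s \<ge> \<tau>0 - r1}"

end

theory Submission
  imports Defs
begin

lemma sum2: "(\<Sum>i<(2::nat). f i) = f 0 + f 1"
  by (simp add: numeral_2_eq_2)

lemma exp_cancel: "exp (2*(a::real)* s) * exp (-2*a* s) = 1" "exp (-2*a* s) * exp (2*a* s) = 1"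
  by (simp_all add: exp_add[symmetric])

lemma Jn_Cv: "Jn a \<phi> N (n_Cv a) t s * exp (2*a* s) =
   (N t s 0 - N t s 1) * (pd \<phi> 0 t s - pd \<phi> 1 t s)^2 / 2"
  unfolding Jn_def Jcur_def Tse_def n_Cv_def gmet_def ginv_def eta_def d_u_def vcoord_def ucoord_def
  apply (simp add: sum2 power2_eq_square exp_minus field_simps)
  done

lemma Jn_Sigma: "Jn a \<phi> N (n_Sigma a) t s * exp (a * s) =
   ((N t s 0 - N t s 1) * (pd \<phi> 0 t s - pd \<phi> 1 t s)^2
  + (N t s 0 + N t s 1) * (pd \<phi> 0 t s + pd \<phi> 1 t s)^2) / 4"
  unfolding Jn_def Jcur_def Tse_def n_Sigma_def gmet_def ginv_def eta_def d_tau_def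
  apply (simp add: sum2 power2_eq_square exp_minus field_simps)
  done

lemma pd_gmet0: "pd (\<lambda>t' s'. gmet a s' \<mu> \<nu>) 0 t s = 0"
  unfolding pd_def by simp

lemma pd_gmet1: "pd (\<lambda>t' s'. gmet a s' \<mu> \<nu>) (Suc 0) t s = 2 * a * exp (2 * a * s) * eta \<mu> \<nu>"
  unfolding pd_def gmet_def
  apply simp
  apply (rule DERIV_imp_deriv)
  apply (auto intro!: derivative_eq_intros)
  done

lemma Kcur_eq:
  assumes "pd (\<lambda>t' s'. N t' s' 0) 0 t s = 0" "pd (\<lambda>t' s'. N t' s' 1) 0 t s = 0"
  shows "Kcur a \<phi> N t s = exp (-2*a * s) * (pd (\<lambda>t' s'. N t' s' 0) 1 t s * pd \<phi> 0 t s * pd \<phi> 1 t s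
     + pd (\<lambda>t' s'. N t' s' 1) 1 t s * ((pd \<phi> 0 t s)^2 + (pd \<phi> 1 t s)^2) / 2)"
proof -
  have a2: "pd (\<lambda>t' s'. N t' s' (Suc 0)) 0 t s = 0" using assms(2) by simp
  show ?thesis
  unfolding Kcur_def deform_def Tse_def
  apply (simp add: sum2 assms(1) a2 pd_gmet0 pd_gmet1)
  apply (simp add: gmet_def ginv_def eta_def power2_eq_square exp_minus field_simps)
  done
qed

lemma C1_funD:
  assumes "C1_fun f"
  shows "cont2 f" "cont2 (pd f 0)" "cont2 (pd f 1)"
    "\<And>t s. ((\<lambda>x. f x s) has_real_derivative pd f 0 t s) (at t)"
    "\<And>t s. ((\<lambda>y. f t y) has_real_derivative pd f 1 t s) (at s)"
proof -
  have h: "\<forall>\<mu><2. (\<forall>t s. has_pd f \<mu> t s) \<and> cont2 (pd f \<mu>)" and c: "cont2 f"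
    using assms unfolding C1_fun_def by auto
  show "cont2 f" by (fact c)
  show "cont2 (pd f 0)" "cont2 (pd f 1)" using h by auto
  fix t s
  have "has_pd f 0 t s" "has_pd f 1 t s" using h by auto
  then show "((\<lambda>x. f x s) has_real_derivative pd f 0 t s) (at t)"
    "((\<lambda>y. f t y) has_real_derivative pd f 1 t s) (at s)"
    unfolding has_pd_def pd_def by (auto simp: DERIV_deriv_iff_real_differentiable)
qed

lemma cont2_comp:
  fixes g1 g2 :: "'a::topological_space \<Rightarrow> real"
  assumes "cont2 f" "continuous_on UNIV g1" "continuous_on UNIV g2"
  shows "continuous_on UNIV (\<lambda>x. f (g1 x) (g2 x))"
proof -
  have "continuous_on UNIV (\<lambda>x. (\<lambda>p::real \<times> real. f (fst p) (snd p)) (g1 x, g2 x))"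
    apply (rule continuous_on_compose2[of UNIV "\<lambda>p::real \<times> real. f (fst p) (snd p)" UNIV "\<lambda>x. (g1 x, g2 x)"])
    using assms unfolding cont2_def by (auto intro!: continuous_intros)
  then show ?thesis by simp
qed

lemma pd_const: "pd (\<lambda>t' s'. c) \<mu> t s = 0"
  unfolding pd_def by simp

lemma N_facts:
  assumes N_C1: "C1_field N"
    and N_commutes: "\<forall>t s. \<forall>\<mu><2. lie_bracket d_tau N t s \<mu> = 0"
    and mu: "\<mu> < 2"
  shows "pd (\<lambda>t' s'. N t' s' \<mu>) 0 t s = 0" "N t s \<mu> = N 0 s \<mu>"
    "pd (\<lambda>t' s'. N t' s' \<mu>) 1 t s = pd (\<lambda>t' s'. N t' s' \<mu>) 1 0 s"
proof -
  have C: "C1_fun (\<lambda>t s. N t s \<mu>)" using N_C1 mu unfolding C1_field_def by auto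
  have z: "pd (\<lambda>t' s'. N t' s' \<mu>) 0 t s = 0" for t s
  proof -
    have "lie_bracket d_tau N t s \<mu> = 0" using N_commutes mu by auto
    moreover have "pd (\<lambda>t' s'. d_tau t' s' \<mu>) \<nu> t s = 0" for \<nu>
      unfolding d_tau_def by (rule pd_const)
    ultimately show ?thesis unfolding lie_bracket_def by (simp add: sum2 d_tau_def)
  qed
  then show "pd (\<lambda>t' s'. N t' s' \<mu>) 0 t s = 0" .
  have "\<forall>x. ((\<lambda>x. N x s \<mu>) has_real_derivative 0) (at x)" for s
    using C1_funD(4)[OF C] z by metis
  then have cst: "N t s \<mu> = N t' s \<mu>" for t t' s
    by (rule DERIV_isconst_all)
  then show "N t s \<mu> = N 0 s \<mu>" .
  show "pd (\<lambda>t' s'. N t' s' \<mu>) 1 t s = pd (\<lambda>t' s'. N t' s' \<mu>) 1 0 s"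
    unfolding pd_def using cst[of t _ 0] by simp
qed

lemma pd_lin: "pd (\<lambda>t s. t - s) 0 t s = 1" "pd (\<lambda>t s. t - s) 1 t s = -1"
  unfolding pd_def
  by (auto intro!: DERIV_imp_deriv derivative_eq_intros)

lemma Nu_decay:
  assumes N_C1: "C1_field N"
    and N_commutes: "\<forall>t s. \<forall>\<mu><2. lie_bracket d_tau N t s \<mu> = 0"
    and redshift: "\<forall>\<phi> t s. s \<le> r0 \<longrightarrow>
        (a - \<epsilon>) * Jn a \<phi> N (n_Cv a) t s \<le> Kcur a \<phi> N t s"
    and rs: "\<rho> \<le> s" "s \<le> r0"
  shows "N 0 s 0 - N 0 s 1 \<le> (N 0 \<rho> 0 - N 0 \<rho> 1) * exp (- (2 * (a - \<epsilon>)) * (s - \<rho>))"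
proof -
  define k where "k = 2 * (a - \<epsilon>)"
  define Nu where "Nu x = N 0 x 0 - N 0 x 1" for x
  define D where "D \<mu> x = pd (\<lambda>t' s'. N t' s' \<mu>) 1 0 x" for \<mu> x
  have C0: "C1_fun (\<lambda>t s. N t s 0)" and C1: "C1_fun (\<lambda>t s. N t s 1)"
    using N_C1 unfolding C1_field_def by auto
  have dNu: "(Nu has_real_derivative (D 0 x - D 1 x)) (at x)" for x
    unfolding Nu_def D_def
    using C1_funD(5)[OF C0, of 0 x] C1_funD(5)[OF C1, of 0 x]
    by (auto intro!: derivative_eq_intros)
  have ineq: "k * Nu x \<le> D 1 x - D 0 x" if "x \<le> r0" for x
  proof -
    have r: "(a - \<epsilon>) * Jn a (\<lambda>t s. t - s) N (n_Cv a) 0 x \<le> Kcur a (\<lambda>t s. t - s) N 0 x"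
      using redshift that by blast
    have z: "pd (\<lambda>t' s'. N t' s' 0) 0 0 x = 0" "pd (\<lambda>t' s'. N t' s' 1) 0 0 x = 0"
      using N_facts(1)[OF N_C1 N_commutes] by auto
    have "Jn a (\<lambda>t s. t - s) N (n_Cv a) 0 x * exp (2 * a * x) = 2 * Nu x"
      unfolding Jn_Cv pd_lin Nu_def by simp
    then have J: "Jn a (\<lambda>t s. t - s) N (n_Cv a) 0 x = 2 * Nu x * exp (-2 * a * x)"
      by (simp add: exp_minus field_simps)
    have K: "Kcur a (\<lambda>t s. t - s) N 0 x = exp (-2 * a * x) * (D 1 x - D 0 x)"
      unfolding Kcur_eq[OF z] pd_lin D_def by simp
    have "exp (-2 * a * x) * ((a - \<epsilon>) * 2 * Nu x) \<le> exp (-2 * a * x) * (D 1 x - D 0 x)"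
      using r J K by (simp add: algebra_simps)
    then have "(a - \<epsilon>) * 2 * Nu x \<le> D 1 x - D 0 x"
      by (subst (asm) mult_le_cancel_left_pos) auto
    then show ?thesis unfolding k_def by (simp add: algebra_simps)
  qed
  define E where "E x = Nu x * exp (k * x)" for x
  have "E s \<le> E \<rho>"
  proof (rule DERIV_nonpos_imp_nonincreasing[OF rs(1)])
    fix x assume x: "\<rho> \<le> x" "x \<le> s"
    have "(E has_real_derivative ((D 0 x - D 1 x) * exp (k * x) + Nu x * (exp (k * x) * k))) (at x)"
      unfolding E_def by (auto intro!: derivative_eq_intros dNu)
    moreover have "(D 0 x - D 1 x) * exp (k * x) + Nu x * (exp (k * x) * k) \<le> 0"
    proof -
      have "k * Nu x \<le> D 1 x - D 0 x" using ineq x rs by auto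
      then have "(D 0 x - D 1 x + k * Nu x) * exp (k * x) \<le> 0"
        by (intro mult_nonpos_nonneg) auto
      then show ?thesis by (simp add: algebra_simps)
    qed
    ultimately show "\<exists>y. (E has_real_derivative y) (at x) \<and> y \<le> 0" by blast
  qed
  then have "Nu s * exp (k * s) \<le> Nu \<rho> * exp (k * \<rho>)" unfolding E_def .
  then have "Nu s * exp (k * s) * exp (- k * s) \<le> Nu \<rho> * exp (k * \<rho>) * exp (- k * s)"
    by (intro mult_right_mono) auto
  then have "Nu s \<le> Nu \<rho> * exp (- k * (s - \<rho>))"
    by (simp add: mult.assoc exp_add[symmetric] algebra_simps)
  then show ?thesis unfolding Nu_def k_def by simp
qed

lemma C2_funD: assumes "C2_fun f" shows "C1_fun f" "C1_fun (pd f 0)" "C1_fun (pd f 1)"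
  using assms unfolding C2_fun_def by auto

lemma cont2_eps:
  assumes "cont2 F" "e > 0"
  shows "\<exists>d>0. \<forall>x y. \<bar>x - t\<bar> < d \<and> \<bar>y - s\<bar> < d \<longrightarrow> \<bar>F x y - F t s\<bar> < e"
proof -
  from assms(1)[unfolded cont2_def continuous_on_iff] assms(2)
  obtain d where d: "d > 0" "\<And>p::real\<times>real. dist p (t, s) < d \<Longrightarrow> dist (F (fst p) (snd p)) (F t s) < e"
    by (metis UNIV_I fst_conv snd_conv)
  show ?thesis
  proof (intro exI[of _ "d/2"] conjI allI impI)
    fix x y assume xy: "\<bar>x - t\<bar> < d / 2 \<and> \<bar>y - s\<bar> < d / 2"
    have "dist (x, y) (t, s) \<le> norm (x - t) + norm (y - s)"
      unfolding dist_norm using norm_Pair_le[of "x - t" "y - s"] by simp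
    also have "\<dots> < d" using xy by simp
    finally show "\<bar>F x y - F t s\<bar> < e" using d(2)[of "(x, y)"] by (simp add: dist_real_def)
  qed (use d in auto)
qed

lemma abs_contra: "\<bar>A - A0\<bar> < \<bar>A0 - B0\<bar> / 2 \<Longrightarrow> \<bar>B - B0\<bar> < \<bar>A0 - B0\<bar> / 2 \<Longrightarrow> A = B \<Longrightarrow> False"
  for A A0 B B0 :: real by (simp add: abs_if split: if_splits)

lemma clairaut:
  assumes C2: "C2_fun f"
  shows "pd (pd f 0) 1 t s = pd (pd f 1) 0 t s"
proof -
  define P where "P = pd f 0"
  define Q where "Q = pd f 1"
  have Cf: "C1_fun f" and CP: "C1_fun P" and CQ: "C1_fun Q"
    using C2_funD[OF C2] unfolding P_def Q_def by auto
  have key: "\<exists>\<xi> \<eta> \<xi>' \<eta>'. \<bar>\<xi> - t\<bar> < h \<and> \<bar>\<eta> - s\<bar> < h \<and> \<bar>\<xi>' - t\<bar> < h \<and> \<bar>\<eta>' - s\<bar> < h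
      \<and> pd P 1 \<xi> \<eta> = pd Q 0 \<xi>' \<eta>'" if h: "h > 0" for h
  proof -
    define g1 where "g1 x = f x (s + h) - f x s" for x
    define g2 where "g2 y = f (t + h) y - f t y" for y
    have "\<exists>z. t < z \<and> z < t + h \<and> g1 (t + h) - g1 t = (t + h - t) * (P z (s + h) - P z s)"
      apply (rule MVT2) using h apply simp
      unfolding g1_def P_def
      by (auto intro!: derivative_eq_intros C1_funD(4)[OF Cf])
    then obtain \<xi> where \<xi>: "t < \<xi>" "\<xi> < t + h" "g1 (t + h) - g1 t = h * (P \<xi> (s + h) - P \<xi> s)"
      by auto
    have "\<exists>z. s < z \<and> z < s + h \<and> P \<xi> (s + h) - P \<xi> s = (s + h - s) * pd P 1 \<xi> z"
      apply (rule MVT2) using h apply simp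
      by (rule C1_funD(5)[OF CP])
    then obtain \<eta> where \<eta>: "s < \<eta>" "\<eta> < s + h" "P \<xi> (s + h) - P \<xi> s = h * pd P 1 \<xi> \<eta>"
      by auto
    have "\<exists>z. s < z \<and> z < s + h \<and> g2 (s + h) - g2 s = (s + h - s) * (Q (t + h) z - Q t z)"
      apply (rule MVT2) using h apply simp
      unfolding g2_def Q_def
      by (auto intro!: derivative_eq_intros C1_funD(5)[OF Cf])
    then obtain \<eta>' where \<eta>': "s < \<eta>'" "\<eta>' < s + h" "g2 (s + h) - g2 s = h * (Q (t + h) \<eta>' - Q t \<eta>')"
      by auto
    have "\<exists>z. t < z \<and> z < t + h \<and> Q (t + h) \<eta>' - Q t \<eta>' = (t + h - t) * pd Q 0 z \<eta>'"
      apply (rule MVT2) using h apply simp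
      by (rule C1_funD(4)[OF CQ])
    then obtain \<xi>' where \<xi>': "t < \<xi>'" "\<xi>' < t + h" "Q (t + h) \<eta>' - Q t \<eta>' = h * pd Q 0 \<xi>' \<eta>'"
      by auto
    have "g1 (t + h) - g1 t = g2 (s + h) - g2 s" unfolding g1_def g2_def by simp
    then have "h * (h * pd P 1 \<xi> \<eta>) = h * (h * pd Q 0 \<xi>' \<eta>')"
      using \<xi>(3) \<eta>(3) \<eta>'(3) \<xi>'(3) by simp
    then have "pd P 1 \<xi> \<eta> = pd Q 0 \<xi>' \<eta>'" using h by simp
    then show ?thesis using \<xi> \<eta> \<xi>' \<eta>' by (intro exI[of _ \<xi>] exI[of _ \<eta>] exI[of _ \<xi>'] exI[of _ \<eta>']) auto
  qed
  show ?thesis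
  proof (rule ccontr)
    assume ne: "pd (pd f 0) 1 t s \<noteq> pd (pd f 1) 0 t s"
    define e where "e = \<bar>pd P 1 t s - pd Q 0 t s\<bar> / 2"
    have e: "e > 0" using ne unfolding e_def P_def Q_def by simp
    obtain d1 where d1: "d1 > 0" "\<And>x y. \<bar>x - t\<bar> < d1 \<and> \<bar>y - s\<bar> < d1 \<Longrightarrow> \<bar>pd P 1 x y - pd P 1 t s\<bar> < e"
      using cont2_eps[OF C1_funD(3)[OF CP] e] by blast
    obtain d2 where d2: "d2 > 0" "\<And>x y. \<bar>x - t\<bar> < d2 \<and> \<bar>y - s\<bar> < d2 \<Longrightarrow> \<bar>pd Q 0 x y - pd Q 0 t s\<bar> < e"
      using cont2_eps[OF C1_funD(2)[OF CQ] e] by blast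
    obtain \<xi> \<eta> \<xi>' \<eta>' where pts: "\<bar>\<xi> - t\<bar> < min d1 d2" "\<bar>\<eta> - s\<bar> < min d1 d2"
      "\<bar>\<xi>' - t\<bar> < min d1 d2" "\<bar>\<eta>' - s\<bar> < min d1 d2" "pd P 1 \<xi> \<eta> = pd Q 0 \<xi>' \<eta>'"
      using key[of "min d1 d2"] d1 d2 by auto
    have "\<bar>pd P 1 \<xi> \<eta> - pd P 1 t s\<bar> < e" using d1(2)[of \<xi> \<eta>] pts(1,2) by auto
    moreover have "\<bar>pd Q 0 \<xi>' \<eta>' - pd Q 0 t s\<bar> < e" using d2(2)[of \<xi>' \<eta>'] pts(3,4) by auto
    ultimately show False using pts(5) unfolding e_def by (rule abs_contra)
  qed
qed

lemma diag_deriv: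
  assumes C: "C1_fun f"
  shows "((\<lambda>h. f (t + h) (s + h)) has_real_derivative (pd f 0 (t + h) (s + h) + pd f 1 (t + h) (s + h))) (at h)"
proof -
  define x where "x = t + h"
  define y where "y = s + h"
  have fx: "((\<lambda>x. f x y) has_derivative (*) (pd f 0 x y)) (at x within UNIV)"
    using C1_funD(4)[OF C, where t=x and s=y] by (simp add: has_field_derivative_def)
  have bl: "blinfun_apply (blinfun_mult_left c) = (*) c" for c :: real
    by (auto simp: fun_eq_iff mult.commute)
  have fy: "((\<lambda>y. f x y) has_derivative blinfun_apply (blinfun_mult_left (pd f 1 x y))) (at y within UNIV)" for x y
    unfolding bl using C1_funD(5)[OF C, where t=x and s=y] by (simp add: has_field_derivative_def)
  have c1: "continuous (at (x, y) within UNIV \<times> UNIV) (\<lambda>p. pd f 1 (fst p) (snd p))"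
    using C1_funD(3)[OF C] unfolding cont2_def
    by (simp add: continuous_on_eq_continuous_at)
  have cont: "continuous (at (x, y) within UNIV \<times> UNIV) (\<lambda>(x, y). blinfun_mult_left (pd f 1 x y))"
    using bounded_linear.continuous[OF bounded_linear_blinfun_mult_left c1]
    by (simp add: case_prod_beta')
  have D: "((\<lambda>(x, y). f x y) has_derivative (\<lambda>(tx, ty). pd f 0 x y * tx + blinfun_apply (blinfun_mult_left (pd f 1 x y)) ty)) (at (x, y) within UNIV \<times> UNIV)"
    by (rule has_derivative_partialsI[OF fx fy cont]) auto
  have D': "((\<lambda>(x, y). f x y) has_derivative (\<lambda>(tx, ty). pd f 0 x y * tx + pd f 1 x y * ty)) (at (x, y))"
    using D unfolding bl by simp
  have G: "((\<lambda>h. (t + h, s + h)) has_derivative (\<lambda>k. (k, k))) (at h)"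
    by (auto intro!: derivative_eq_intros)
  have "(((\<lambda>(x, y). f x y) \<circ> (\<lambda>h. (t + h, s + h))) has_derivative ((\<lambda>(tx, ty). pd f 0 x y * tx + pd f 1 x y * ty) \<circ> (\<lambda>k. (k, k)))) (at h)"
    by (rule diff_chain_at[OF G]) (use D' in \<open>simp add: x_def y_def\<close>)
  then have "((\<lambda>h. f (t + h) (s + h)) has_derivative (\<lambda>k. pd f 0 x y * k + pd f 1 x y * k)) (at h)"
    by (simp add: o_def)
  then show ?thesis
    by (rule has_derivative_imp_has_field_derivative) (simp add: x_def y_def algebra_simps)
qed

lemma sqrt_gdet: "sqrt \<bar>gdet a s\<bar> = exp (2 * a * s)"
proof -
  have "gdet a s = - (exp (2 * a * s) * exp (2 * a * s))" unfolding gdet_def gmet_def eta_def by simp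
  moreover have "sqrt (exp (2 * a * s) * exp (2 * a * s)) = exp (2 * a * s)" by simp
  ultimately show ?thesis by simp
qed

lemma wave_eq:
  assumes C2: "C2_fun \<psi>" and b: "box_g a \<psi> t s = 0"
  shows "pd (pd \<psi> 0) 0 t s = pd (pd \<psi> 1) 1 t s"
proof -
  have e0: "(\<lambda>t' s'. sqrt \<bar>gdet a s'\<bar> * (\<Sum>\<nu><2. ginv a s' 0 \<nu> * pd \<psi> \<nu> t' s')) = (\<lambda>t' s'. - pd \<psi> 0 t' s')"
    by (auto simp: fun_eq_iff sqrt_gdet sum2 ginv_def eta_def exp_add[symmetric])
  have e1: "(\<lambda>t' s'. sqrt \<bar>gdet a s'\<bar> * (\<Sum>\<nu><2. ginv a s' 1 \<nu> * pd \<psi> \<nu> t' s')) = (\<lambda>t' s'. pd \<psi> 1 t' s')"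
    by (auto simp: fun_eq_iff sqrt_gdet sum2 ginv_def eta_def exp_add[symmetric])
  have CP: "C1_fun (pd \<psi> 0)" using C2_funD[OF C2] by auto
  have m: "pd (\<lambda>t' s'. - pd \<psi> 0 t' s') 0 t s = - pd (pd \<psi> 0) 0 t s"
    unfolding pd_def
    by (auto intro!: DERIV_imp_deriv derivative_eq_intros C1_funD(4)[OF CP, unfolded pd_def, simplified])
  have "box_g a \<psi> t s = exp (- (2 * a * s)) * (- pd (pd \<psi> 0) 0 t s + pd (pd \<psi> 1) 1 t s)"
    unfolding box_g_def sum2 e0[unfolded sum2] e1[unfolded sum2] unfolding m sqrt_gdet by (simp add: exp_minus divide_inverse mult.commute)
  then show ?thesis using b by simp
qed

lemma w_diag:
  assumes C2: "C2_fun \<psi>" and b: "\<forall>t s. box_g a \<psi> t s = 0"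
  shows "pd \<psi> 0 (t + h) (s + h) - pd \<psi> 1 (t + h) (s + h) = pd \<psi> 0 t s - pd \<psi> 1 t s"
proof -
  have CP: "C1_fun (pd \<psi> 0)" and CQ: "C1_fun (pd \<psi> 1)" using C2_funD[OF C2] by auto
  have "\<forall>x. ((\<lambda>h. pd \<psi> 0 (t + h) (s + h) - pd \<psi> 1 (t + h) (s + h)) has_real_derivative 0) (at x)"
  proof
    fix x
    have "((\<lambda>h. pd \<psi> 0 (t + h) (s + h) - pd \<psi> 1 (t + h) (s + h)) has_real_derivative
      (pd (pd \<psi> 0) 0 (t + x) (s + x) + pd (pd \<psi> 0) 1 (t + x) (s + x)) -
      (pd (pd \<psi> 1) 0 (t + x) (s + x) + pd (pd \<psi> 1) 1 (t + x) (s + x))) (at x)"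
      by (intro DERIV_diff diag_deriv CP CQ)
    moreover have "(pd (pd \<psi> 0) 0 (t + x) (s + x) + pd (pd \<psi> 0) 1 (t + x) (s + x)) -
      (pd (pd \<psi> 1) 0 (t + x) (s + x) + pd (pd \<psi> 1) 1 (t + x) (s + x)) = 0"
      using wave_eq[OF C2 b[rule_format]] clairaut[OF C2] by simp
    ultimately show "((\<lambda>h. pd \<psi> 0 (t + h) (s + h) - pd \<psi> 1 (t + h) (s + h)) has_real_derivative 0) (at x)"
      by simp
  qed
  from DERIV_isconst_all[OF this, of h 0] show ?thesis by simp
qed

lemma Dplus_sub:
  assumes p: "(t, s) \<in> Dplus a (Sigma_hyp \<tau>0 r)" and sr: "s \<le> r"
  shows "\<tau>0 + r \<le> t + s"
proof (rule ccontr)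
  assume neg: "\<not> \<tau>0 + r \<le> t + s"
  define \<gamma> where "\<gamma> x = (t - x, s)" for x :: real
  have cc: "causal_curve_from a False \<gamma> (t, s)"
    unfolding causal_curve_from_def
  proof (intro conjI exI[of _ "\<lambda>_. (-1, 0)"] allI impI)
    show "\<gamma> 0 = (t, s)" by (simp add: \<gamma>_def)
    show "continuous_on {0..} (\<lambda>_. (-1::real, 0::real))" by simp
    fix x :: real assume "0 \<le> x"
    show "(\<gamma> has_vector_derivative (-1, 0)) (at x within {0..})"
      unfolding \<gamma>_def by (auto intro!: derivative_eq_intros)
    show "((-1::real), (0::real)) \<noteq> 0" by (simp add: zero_prod_def)
    show "gprod a (snd (\<gamma> x)) (\<lambda>\<mu>. if \<mu> = 0 then fst ((-1::real), (0::real)) else snd ((-1::real), (0::real)))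
        (\<lambda>\<mu>. if \<mu> = 0 then fst ((-1::real), (0::real)) else snd ((-1::real), (0::real))) \<le> 0"
      unfolding gprod_def gmet_def eta_def by (simp add: sum2)
    show "(if False then 0 < fst ((-1::real), (0::real)) else fst ((-1::real), (0::real)) < 0)" by simp
  qed
  have inext: "inextendible \<gamma>"
    unfolding inextendible_def
  proof
    assume "\<exists>q. (\<gamma> \<longlongrightarrow> q) at_top"
    then obtain q where "(\<gamma> \<longlongrightarrow> q) at_top" by blast
    then have "((\<lambda>x. fst (\<gamma> x)) \<longlongrightarrow> fst q) at_top" by (rule tendsto_fst)
    then have "((\<lambda>x. t - x) \<longlongrightarrow> fst q) at_top" by (simp add: \<gamma>_def)
    then have "\<forall>\<^sub>F x in at_top. dist (t - x) (fst q) < 1" by (rule tendstoD) simp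
    then obtain X where X: "\<And>x. x \<ge> X \<Longrightarrow> dist (t - x) (fst q) < 1"
      unfolding eventually_at_top_linorder by blast
    have "dist (t - max X (t - fst q + 2)) (fst q) < 1" by (rule X) simp
    then show False by (simp add: dist_real_def)
  qed
  from p cc inext obtain x where x: "x \<ge> 0" "\<gamma> x \<in> Sigma_hyp \<tau>0 r"
    unfolding Dplus_def by blast
  then show False using neg sr
    unfolding Sigma_hyp_def \<gamma>_def vcoord_def ucoord_def by auto
qed

lemma exp_tail_integral:
  fixes c k \<rho> r :: real
  assumes c: "c \<ge> 0" and k: "k > 0" and \<rho>r: "\<rho> \<le> r"
  shows "(\<integral>\<^sup>+ s. ennreal (c * exp (- k * (s - \<rho>)) * indicator {\<rho>..r} s) \<partial>lborel) \<le> ennreal (c / k)"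
proof -
  define F where "F s = - c / k * exp (- k * (s - \<rho>))" for s
  have "((\<lambda>s. c * exp (- k * (s - \<rho>))) has_integral (F r - F \<rho>)) {\<rho>..r}"
  proof (rule fundamental_theorem_of_calculus[OF \<rho>r])
    fix x assume "x \<in> {\<rho>..r}"
    have "(F has_real_derivative (- c / k * (exp (- k * (x - \<rho>)) * (- k * 1)))) (at x within {\<rho>..r})"
      unfolding F_def by (auto intro!: derivative_eq_intros)
    then show "(F has_vector_derivative c * exp (- k * (x - \<rho>))) (at x within {\<rho>..r})"
      using k by (simp add: has_real_derivative_iff_has_vector_derivative[symmetric] field_simps)
  qed
  then have "((\<lambda>s. c * exp (- k * (s - \<rho>)) * indicator {\<rho>..r} s) has_integral (F r - F \<rho>)) UNIV"
  proof -
    have eqf: "(\<lambda>s. c * exp (- k * (s - \<rho>)) * indicator {\<rho>..r} s) = (\<lambda>s. if s \<in> {\<rho>..r} then c * exp (- k * (s - \<rho>)) else 0)"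
      by (auto simp: fun_eq_iff indicator_def)
    show ?thesis unfolding eqf has_integral_restrict_UNIV by fact
  qed
  then have "(\<integral>\<^sup>+ s. ennreal (c * exp (- k * (s - \<rho>)) * indicator {\<rho>..r} s) \<partial>lborel) = ennreal (F r - F \<rho>)"
    by (intro nn_integral_has_integral_lborel) (use c in \<open>auto simp: indicator_def\<close>)
  also have "F r - F \<rho> \<le> c / k"
    unfolding F_def using c k by (simp add: field_simps)
  finally show ?thesis by (simp add: ennreal_leI)
qed

lemma main_integral:
  fixes Nu Wq :: "real \<Rightarrow> real" and k r \<tau>0 :: real
  assumes Nu_cont: "continuous_on UNIV Nu" and Wq_cont: "continuous_on UNIV Wq"
    and Nu_nn: "\<And>s. Nu s \<ge> 0" and Wq_nn: "\<And>\<rho>. Wq \<rho> \<ge> 0" and k: "k > 0"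
    and decay: "\<And>\<rho> s. \<rho> \<le> s \<Longrightarrow> s \<le> r \<Longrightarrow> Nu s \<le> Nu \<rho> * exp (- k * (s - \<rho>))"
  shows "(\<integral>\<^sup>+ p. ennreal (Nu (snd p) * Wq (snd p - fst p + \<tau>0) / 2)
            * indicator {p. snd p \<le> r \<and> \<tau>0 + r \<le> fst p + snd p} p \<partial>lborel)
     \<le> (\<integral>\<^sup>+ \<rho>. ennreal (Nu \<rho> * Wq \<rho> / (2 * k)) \<partial>lborel)"
proof -
  define S where "S = {p::real\<times>real. snd p \<le> r \<and> \<tau>0 + r \<le> fst p + snd p}"
  define F where "F p = ennreal (Nu (snd p) * Wq (snd p - fst p + \<tau>0) / 2) * indicator S p" for p :: "real \<times> real"
  define G where "G s \<rho> = ennreal (Nu s * Wq \<rho> / 2) * indicator {..2 * s - r} \<rho> * indicator {..r} s" for s \<rho> :: real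
  have fcont: "continuous_on UNIV (\<lambda>p::real\<times>real. Nu (snd p) * Wq (snd p - fst p + \<tau>0) / 2)"
    by (intro continuous_intros continuous_on_compose2[OF Nu_cont] continuous_on_compose2[OF Wq_cont]) auto
  have Sc: "closed S" unfolding S_def
    by (intro closed_Collect_conj closed_Collect_le continuous_intros)
  have [measurable]: "S \<in> sets borel" using Sc by (rule borel_closed)
  have [measurable]: "(\<lambda>p::real\<times>real. Nu (snd p) * Wq (snd p - fst p + \<tau>0) / 2) \<in> borel_measurable borel"
    by (rule borel_measurable_continuous_onI[OF fcont])
  have Fm: "F \<in> borel_measurable borel" unfolding F_def by measurable
  have gcont: "continuous_on UNIV (\<lambda>p::real\<times>real. Nu (fst p) * Wq (snd p) / 2)"
    by (intro continuous_intros continuous_on_compose2[OF Nu_cont] continuous_on_compose2[OF Wq_cont]) auto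
  have [measurable]: "(\<lambda>p::real\<times>real. Nu (fst p) * Wq (snd p) / 2) \<in> borel_measurable borel"
    by (rule borel_measurable_continuous_onI[OF gcont])
  have Sc2: "closed {p::real\<times>real. snd p \<le> 2 * fst p - r \<and> fst p \<le> r}"
    by (intro closed_Collect_conj closed_Collect_le continuous_intros)
  have [measurable]: "{p::real\<times>real. snd p \<le> 2 * fst p - r \<and> fst p \<le> r} \<in> sets borel"
    using Sc2 by (rule borel_closed)
  have Geq: "case_prod G = (\<lambda>p. ennreal (Nu (fst p) * Wq (snd p) / 2) * indicator {p::real\<times>real. snd p \<le> 2 * fst p - r \<and> fst p \<le> r} p)"
    by (auto simp: fun_eq_iff G_def indicator_def)
  have Gm: "case_prod G \<in> borel_measurable borel" unfolding Geq by measurable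
  have Gs: "G s \<in> borel_measurable borel" for s
  proof -
    have [measurable]: "Wq \<in> borel_measurable borel" by (rule borel_measurable_continuous_onI[OF Wq_cont])
    show ?thesis unfolding G_def by measurable
  qed
  have "(\<integral>\<^sup>+ p. F p \<partial>lborel) = (\<integral>\<^sup>+ s. (\<integral>\<^sup>+ t. F (t, s) \<partial>lborel) \<partial>lborel)"
  proof -
    have "F \<in> borel_measurable (lborel \<Otimes>\<^sub>M lborel)" using Fm by (simp add: lborel_prod)
    from lborel_pair.nn_integral_snd[OF this] show ?thesis by (simp add: lborel_prod)
  qed
  also have "\<dots> = (\<integral>\<^sup>+ s. (\<integral>\<^sup>+ \<rho>. G s \<rho> \<partial>lborel) \<partial>lborel)"
  proof (rule nn_integral_cong)
    fix s :: real
    have "(\<integral>\<^sup>+ \<rho>. G s \<rho> \<partial>lborel) = ennreal \<bar>-1\<bar> * (\<integral>\<^sup>+ x. G s (s + \<tau>0 + (-1) * x) \<partial>lborel)"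
      by (rule nn_integral_real_affine[OF Gs]) simp
    also have "\<dots> = (\<integral>\<^sup>+ x. F (x, s) \<partial>lborel)"
      by (auto intro!: nn_integral_cong simp: G_def F_def S_def indicator_def algebra_simps)
    finally show "(\<integral>\<^sup>+ t. F (t, s) \<partial>lborel) = (\<integral>\<^sup>+ \<rho>. G s \<rho> \<partial>lborel)" by simp
  qed
  also have "\<dots> = (\<integral>\<^sup>+ \<rho>. (\<integral>\<^sup>+ s. G s \<rho> \<partial>lborel) \<partial>lborel)"
  proof -
    have "(\<lambda>(x, y). G y x) \<in> borel_measurable (lborel \<Otimes>\<^sub>M lborel)"
    proof -
      have "(\<lambda>(x, y). G y x) = case_prod G \<circ> (\<lambda>p. (snd p, fst p))" by (auto simp: fun_eq_iff)
      moreover have "case_prod G \<circ> (\<lambda>p. (snd p, fst p)) \<in> borel_measurable (borel :: (real \<times> real) measure)"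
      proof -
        have sw: "(\<lambda>p::real\<times>real. (snd p, fst p)) \<in> borel \<rightarrow>\<^sub>M borel"
          by (intro borel_measurable_continuous_onI continuous_intros)
        show ?thesis using measurable_comp[OF sw Gm] .
      qed
      ultimately show ?thesis by (simp add: lborel_prod)
    qed
    from lborel_pair.Fubini'[OF this] show ?thesis by simp
  qed
  also have "\<dots> \<le> (\<integral>\<^sup>+ \<rho>. ennreal (Nu \<rho> * Wq \<rho> / (2 * k)) \<partial>lborel)"
  proof (rule nn_integral_mono)
    fix \<rho> :: real
    show "(\<integral>\<^sup>+ s. G s \<rho> \<partial>lborel) \<le> ennreal (Nu \<rho> * Wq \<rho> / (2 * k))"
    proof (cases "\<rho> \<le> r")
      case False
      then have "G s \<rho> = 0" for s by (auto simp: G_def indicator_def)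
      then show ?thesis by simp
    next
      case True
      define c where "c = Nu \<rho> * Wq \<rho> / 2"
      have c: "c \<ge> 0" unfolding c_def using Nu_nn Wq_nn by simp
      have "(\<integral>\<^sup>+ s. G s \<rho> \<partial>lborel) \<le> (\<integral>\<^sup>+ s. ennreal (c * exp (- k * (s - \<rho>)) * indicator {\<rho>..r} s) \<partial>lborel)"
      proof (rule nn_integral_mono)
        fix s :: real
        show "G s \<rho> \<le> ennreal (c * exp (- k * (s - \<rho>)) * indicator {\<rho>..r} s)"
        proof (cases "\<rho> \<le> 2 * s - r \<and> s \<le> r")
          case True
          then have rs: "\<rho> \<le> s" "s \<le> r" by auto
          have "Nu s * Wq \<rho> / 2 \<le> Nu \<rho> * exp (- k * (s - \<rho>)) * Wq \<rho> / 2"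
            using decay[OF rs] Wq_nn[of \<rho>] by (intro divide_right_mono mult_right_mono) auto
          then show ?thesis using True rs unfolding G_def c_def
            by (auto simp: indicator_def intro!: ennreal_leI simp: algebra_simps)
        next
          case False
          then show ?thesis by (auto simp: G_def indicator_def)
        qed
      qed
      also have "\<dots> \<le> ennreal (c / k)" by (rule exp_tail_integral[OF c k True])
      also have "c / k = Nu \<rho> * Wq \<rho> / (2 * k)" unfolding c_def by simp
      finally show ?thesis .
    qed
  qed
  finally show ?thesis unfolding F_def S_def by simp
qed

theorem proposition4p3:
  fixes a \<epsilon> r0 R c CN CK :: real
    and N :: "real \<Rightarrow> real \<Rightarrow> nat \<Rightarrow> real"
    and rt0 rt1 :: real
  assumes a_pos: "a > 0"
    and eps_pos: "\<epsilon> > 0" and eps_lt: "\<epsilon> < a"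
    and N_C1: "C1_field N"
    and N_timelike: "future_timelike a N"
    and N_commutes: "\<forall>t s. \<forall>\<mu><2. lie_bracket d_tau N t s \<mu> = 0"
    and r0_R: "r0 < R" and c_pos: "c > 0" and CN_pos: "CN > 0" and CK_pos: "CK > 0"
    and redshift: "\<forall>\<phi> t s. s \<le> r0 \<longrightarrow>
        (a - \<epsilon>) * Jn a \<phi> N (n_Cv a) t s \<le> Kcur a \<phi> N t s"
    and compar: "\<forall>\<phi> t s. r0 \<le> s \<and> s \<le> R \<longrightarrow>
        c * Jn a \<phi> d_tau (n_Sigma a) t s \<le> Jn a \<phi> N (n_Sigma a) t s \<and>
        Jn a \<phi> N (n_Sigma a) t s \<le> CN * Jn a \<phi> d_tau (n_Sigma a) t s"
    and far: "\<forall>\<phi> t s. s \<ge> R \<longrightarrow> Jn a \<phi> N (n_Cu a) t s = Jn a \<phi> d_tau (n_Cu a) t s"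
    and Kbound: "\<forall>\<phi> t s. r0 \<le> s \<and> s \<le> R \<longrightarrow>
        \<bar>Kcur a \<phi> N t s\<bar> \<le> CK * Jn a \<phi> d_tau (n_Sigma a) t s"
    and rt: "rt0 < rt1" "rt1 < r0"
  shows "\<exists>C::real. \<forall>(\<psi>::real \<Rightarrow> real \<Rightarrow> real) \<tau>0 \<tau>1 rstar.
     C2_fun \<psi> \<and> (\<forall>t s. box_g a \<psi> t s = 0) \<and>
     (\<exists>\<tau>d K. compact K \<and> (\<forall>s. (Ucoord a \<tau>d s, Vcoord a \<tau>d s) \<notin> K \<longrightarrow>
                              \<psi> \<tau>d s = 0 \<and> pd \<psi> 0 \<tau>d s = 0)) \<and>
     \<tau>0 < \<tau>1 \<and> rt0 < rstar \<and> rstar < rt1 \<and>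
     (let g = (\<lambda>rb. integral {\<tau>0..\<tau>1} (\<lambda>t. Jn a \<psi> N (n_S a) t rb * exp (a * rb)))
      in g rstar = 1 / (rt1 - rt0) * integral {rt0..rt1} g)
     \<longrightarrow>
     (\<integral>\<^sup>+ p \<in> (Dplus a (Sigma_hyp \<tau>0 rstar) \<inter> Dminus a (Sigma_hyp \<tau>1 rstar)
                  \<inter> {p. snd p \<le> rstar}).
         ennreal (Jn a \<psi> N (n_Cv a) (fst p) (snd p) * exp (2 * a * snd p)) \<partial>lborel)
     \<le> ennreal C * (\<integral>\<^sup>+ s. ennreal (Jn a \<psi> N (n_Sigma a) \<tau>0 s * exp (a * s)) \<partial>lborel)"
proof -
  define k where "k = 2 * (a - \<epsilon>)"
  have k: "k > 0" using eps_lt unfolding k_def by simp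
  have CN0: "C1_fun (\<lambda>t s. N t s 0)" and CN1: "C1_fun (\<lambda>t s. N t s 1)"
    using N_C1 unfolding C1_field_def by auto
  define Nu where "Nu s = N 0 s 0 - N 0 s 1" for s
  have Nt: "N t s \<mu> = N 0 s \<mu>" if "\<mu> < 2" for t s \<mu>
    using N_facts(2)[OF N_C1 N_commutes that] .
  have Npos: "N 0 s 0 - N 0 s 1 > 0 \<and> N 0 s 0 + N 0 s 1 > 0" for s
  proof -
    have g1: "gprod a s (N 0 s) (N 0 s) < 0" and g2: "gprod a s (N 0 s) (d_tau 0 s) < 0"
      using N_timelike unfolding future_timelike_def by auto
    have e: "exp (2 * a * s) > 0" by simp
    from g1 have "exp (2 * a * s) * (N 0 s 1 * N 0 s 1 - N 0 s 0 * N 0 s 0) < 0"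
      unfolding gprod_def gmet_def eta_def by (simp add: sum2 algebra_simps)
    then have h1: "N 0 s 1 * N 0 s 1 < N 0 s 0 * N 0 s 0"
      using e by (simp add: mult_less_0_iff)
    from g2 have "exp (2 * a * s) * N 0 s 0 > 0"
      unfolding gprod_def gmet_def eta_def d_tau_def by (simp add: sum2)
    then have h2: "N 0 s 0 > 0" using e by (simp add: zero_less_mult_iff)
    have "\<bar>N 0 s 1\<bar> < N 0 s 0"
    proof (rule ccontr)
      assume "\<not> \<bar>N 0 s 1\<bar> < N 0 s 0"
      then have "N 0 s 0 \<le> \<bar>N 0 s 1\<bar>" by simp
      then have "N 0 s 0 * N 0 s 0 \<le> \<bar>N 0 s 1\<bar> * \<bar>N 0 s 1\<bar>"
        using h2 by (intro mult_mono) auto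
      then show False using h1 by (simp add: abs_mult_self_eq)
    qed
    then show ?thesis by auto
  qed
  have Nu_cont: "continuous_on UNIV Nu"
    unfolding Nu_def
    by (intro continuous_intros cont2_comp[OF C1_funD(1)[OF CN0]] cont2_comp[OF C1_funD(1)[OF CN1]])
  show ?thesis
  proof (intro exI[of _ "1 / (a - \<epsilon>)"] allI impI)
    fix \<psi> :: "real \<Rightarrow> real \<Rightarrow> real" and \<tau>0 \<tau>1 rstar :: real
    assume H: "C2_fun \<psi> \<and> (\<forall>t s. box_g a \<psi> t s = 0) \<and>
     (\<exists>\<tau>d K. compact K \<and> (\<forall>s. (Ucoord a \<tau>d s, Vcoord a \<tau>d s) \<notin> K \<longrightarrow>
                              \<psi> \<tau>d s = 0 \<and> pd \<psi> 0 \<tau>d s = 0)) \<and>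
     \<tau>0 < \<tau>1 \<and> rt0 < rstar \<and> rstar < rt1 \<and>
     (let g = (\<lambda>rb. integral {\<tau>0..\<tau>1} (\<lambda>t. Jn a \<psi> N (n_S a) t rb * exp (a * rb)))
      in g rstar = 1 / (rt1 - rt0) * integral {rt0..rt1} g)"
    then have C2: "C2_fun \<psi>" and box: "\<forall>t s. box_g a \<psi> t s = 0" and rs: "rstar < rt1" by auto
    have C1\<psi>: "C1_fun \<psi>" using C2_funD[OF C2] by auto
    define Wq where "Wq \<rho> = (pd \<psi> 0 \<tau>0 \<rho> - pd \<psi> 1 \<tau>0 \<rho>)^2" for \<rho>
    have Wq_cont: "continuous_on UNIV Wq"
      unfolding Wq_def
      by (intro continuous_intros cont2_comp[OF C1_funD(2)[OF C1\<psi>]] cont2_comp[OF C1_funD(3)[OF C1\<psi>]])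
    have decay: "Nu s \<le> Nu \<rho> * exp (- k * (s - \<rho>))" if "\<rho> \<le> s" "s \<le> rstar" for \<rho> s
      unfolding Nu_def k_def
      using Nu_decay[OF N_C1 N_commutes redshift, of \<rho> s] that rs rt by simp
    define S where "S = {p::real\<times>real. snd p \<le> rstar \<and> \<tau>0 + rstar \<le> fst p + snd p}"
    define Reg where "Reg = Dplus a (Sigma_hyp \<tau>0 rstar) \<inter> Dminus a (Sigma_hyp \<tau>1 rstar) \<inter> {p. snd p \<le> rstar}"
    have LHS_pt: "ennreal (Jn a \<psi> N (n_Cv a) (fst p) (snd p) * exp (2 * a * snd p)) * indicator Reg p
        \<le> ennreal (Nu (snd p) * Wq (snd p - fst p + \<tau>0) / 2) * indicator S p" for p
    proof (cases "p \<in> Reg")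
      case True
      obtain t s where p: "p = (t, s)" by (cases p)
      have "s \<le> rstar" "(t, s) \<in> Dplus a (Sigma_hyp \<tau>0 rstar)" using True p unfolding Reg_def by auto
      then have pS: "p \<in> S" using Dplus_sub unfolding S_def p by auto
      have w: "pd \<psi> 0 t s - pd \<psi> 1 t s = pd \<psi> 0 \<tau>0 (s - t + \<tau>0) - pd \<psi> 1 \<tau>0 (s - t + \<tau>0)"
        using w_diag[OF C2 box, where t=\<tau>0 and s="s - t + \<tau>0" and h="t - \<tau>0"] by simp
      have eq: "Jn a \<psi> N (n_Cv a) t s * exp (2 * a * s) = Nu s * Wq (s - t + \<tau>0) / 2"
        unfolding Jn_Cv Nu_def Wq_def w[symmetric] using Nt[of 0 t s] Nt[of 1 t s] by simp
      show ?thesis using True pS unfolding p by (simp only: eq fst_conv snd_conv indicator_simps)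
    next
      case False
      then show ?thesis by simp
    qed
    have "(\<integral>\<^sup>+ p \<in> Reg. ennreal (Jn a \<psi> N (n_Cv a) (fst p) (snd p) * exp (2 * a * snd p)) \<partial>lborel)
       \<le> (\<integral>\<^sup>+ p. ennreal (Nu (snd p) * Wq (snd p - fst p + \<tau>0) / 2) * indicator S p \<partial>lborel)"
      by (rule nn_integral_mono) (rule LHS_pt)
    also have "\<dots> \<le> (\<integral>\<^sup>+ \<rho>. ennreal (Nu \<rho> * Wq \<rho> / (2 * k)) \<partial>lborel)"
      unfolding S_def
      by (rule main_integral[OF Nu_cont Wq_cont _ _ k decay])
         (use Npos in \<open>auto simp: Nu_def Wq_def less_imp_le\<close>)
    also have "\<dots> \<le> ennreal (1 / (a - \<epsilon>)) * (\<integral>\<^sup>+ s. ennreal (Jn a \<psi> N (n_Sigma a) \<tau>0 s * exp (a * s)) \<partial>lborel)"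
    proof -
      define h where "h s = ((N \<tau>0 s 0 - N \<tau>0 s 1) * (pd \<psi> 0 \<tau>0 s - pd \<psi> 1 \<tau>0 s)^2
         + (N \<tau>0 s 0 + N \<tau>0 s 1) * (pd \<psi> 0 \<tau>0 s + pd \<psi> 1 \<tau>0 s)^2) / 4" for s
      have hJ: "Jn a \<psi> N (n_Sigma a) \<tau>0 s * exp (a * s) = h s" for s
        unfolding h_def by (rule Jn_Sigma)
      have hc: "continuous_on UNIV h"
        unfolding h_def
        by (intro continuous_intros cont2_comp[OF C1_funD(2)[OF C1\<psi>]] cont2_comp[OF C1_funD(3)[OF C1\<psi>]]
            cont2_comp[OF C1_funD(1)[OF CN0]] cont2_comp[OF C1_funD(1)[OF CN1]]) auto
      have [measurable]: "h \<in> borel_measurable borel" by (rule borel_measurable_continuous_onI[OF hc])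
      have "(\<integral>\<^sup>+ \<rho>. ennreal (Nu \<rho> * Wq \<rho> / (2 * k)) \<partial>lborel) \<le> (\<integral>\<^sup>+ s. ennreal (1 / (a - \<epsilon>)) * ennreal (h s) \<partial>lborel)"
      proof (rule nn_integral_mono)
        fix s :: real
        have n: "N \<tau>0 s 0 = N 0 s 0" "N \<tau>0 s 1 = N 0 s 1" using Nt[of 0 \<tau>0 s] Nt[of 1 \<tau>0 s] by auto
        have p2: "(N 0 s 0 + N 0 s 1) * (pd \<psi> 0 \<tau>0 s + pd \<psi> 1 \<tau>0 s)^2 \<ge> 0"
          using Npos[of s] by simp
        have hge: "h s \<ge> Nu s * Wq s / 4"
          unfolding h_def n Nu_def Wq_def using p2 by simp
        have nn: "Nu s * Wq s \<ge> 0" using Npos[of s] unfolding Nu_def Wq_def by simp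
        have "Nu s * Wq s / (2 * k) = 1 / (a - \<epsilon>) * (Nu s * Wq s / 4)"
          unfolding k_def using eps_lt by (simp add: field_simps)
        also have "\<dots> \<le> 1 / (a - \<epsilon>) * h s"
          using hge eps_lt by (intro mult_left_mono) auto
        finally have "Nu s * Wq s / (2 * k) \<le> 1 / (a - \<epsilon>) * h s" .
        then have "ennreal (Nu s * Wq s / (2 * k)) \<le> ennreal (1 / (a - \<epsilon>) * h s)"
          by (rule ennreal_leI)
        also have "\<dots> = ennreal (1 / (a - \<epsilon>)) * ennreal (h s)"
          by (rule ennreal_mult) (use eps_lt hge nn in auto)
        finally show "ennreal (Nu s * Wq s / (2 * k)) \<le> ennreal (1 / (a - \<epsilon>)) * ennreal (h s)" .
      qed
      also have "\<dots> = ennreal (1 / (a - \<epsilon>)) * (\<integral>\<^sup>+ s. ennreal (h s) \<partial>lborel)"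
        by (rule nn_integral_cmult) measurable
      finally show ?thesis unfolding hJ .
    qed
    finally show "(\<integral>\<^sup>+ p \<in> (Dplus a (Sigma_hyp \<tau>0 rstar) \<inter> Dminus a (Sigma_hyp \<tau>1 rstar)
                  \<inter> {p. snd p \<le> rstar}).
         ennreal (Jn a \<psi> N (n_Cv a) (fst p) (snd p) * exp (2 * a * snd p)) \<partial>lborel)
     \<le> ennreal (1 / (a - \<epsilon>)) * (\<integral>\<^sup>+ s. ennreal (Jn a \<psi> N (n_Sigma a) \<tau>0 s * exp (a * s)) \<partial>lborel)"
      unfolding Reg_def .
  qed
qed

end
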